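(* For any $n$-qubit pure state $\ket{\psi}$ and any integer $k\ge1$, the $nk$-qubit state $\ket{\psi}^{\otimes k}$ satisfies $\mathcal{C}(\ket{\psi}^{\otimes k})=1-\big(1-\mathcal{C}(\ket{\psi})\big)^k$.
   Context: For an $m$-qubit pure state $\ket{\phi}$, $\mathcal{C}(\ket{\phi})=1-\frac{1}{2^{m}}\sum_{\alpha}\mathrm{Tr}[\rho_\alpha^2]$, the sum over all subsets $\alpha$ of its $m$ qubits, $\rho_\alpha$ the reduced state on $\alpha$, $\mathrm{Tr}[\rho_\emptyset^2]=1$. *)

theory Defs
  imports Complex_Main
begin

text \<open>A basis state |b_0 ... b_{m-1}> is encoded by the set of qubit positions i < m with b_i = 1,
  i.e. by a subset of {..<m}.  Values of the function outside Pow {..<m} are irrelevant.\<close>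

definition pure_state :: "nat \<Rightarrow> (nat set \<Rightarrow> complex) \<Rightarrow> bool" where
  "pure_state m \<psi> \<longleftrightarrow> (\<Sum>S\<in>Pow {..<m}. (cmod (\<psi> S))\<^sup>2) = 1"

text \<open>Reduced density matrix rho_alpha = Tr_{complement of alpha} |psi><psi|, entries indexed by
  basis states x, y of the subsystem alpha (subsets of alpha).\<close>

definition reduced :: "nat \<Rightarrow> (nat set \<Rightarrow> complex) \<Rightarrow> nat set \<Rightarrow> nat set \<Rightarrow> nat set \<Rightarrow> complex" where
  "reduced m \<psi> \<alpha> x y = (\<Sum>z\<in>Pow ({..<m} - \<alpha>). \<psi> (x \<union> z) * cnj (\<psi> (y \<union> z)))"

definition purity :: "nat \<Rightarrow> (nat set \<Rightarrow> complex) \<Rightarrow> nat set \<Rightarrow> complex" where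
  "purity m \<psi> \<alpha> = (\<Sum>x\<in>Pow \<alpha>. \<Sum>y\<in>Pow \<alpha>. reduced m \<psi> \<alpha> x y * reduced m \<psi> \<alpha> y x)"

definition conc :: "nat \<Rightarrow> (nat set \<Rightarrow> complex) \<Rightarrow> real" where
  "conc m \<psi> = 1 - (1 / 2 ^ m) * (\<Sum>\<alpha>\<in>Pow {..<m}. Re (purity m \<psi> \<alpha>))"

definition tensor_power :: "nat \<Rightarrow> nat \<Rightarrow> (nat set \<Rightarrow> complex) \<Rightarrow> (nat set \<Rightarrow> complex)" where
  "tensor_power n k \<psi> = (\<lambda>S. \<Prod>j<k. \<psi> {i. i < n \<and> j * n + i \<in> S})"

end

theory Submission imports Defs begin

definition red :: "nat set \<Rightarrow> (nat set \<Rightarrow> complex) \<Rightarrow> nat set \<Rightarrow> nat set \<Rightarrow> nat set \<Rightarrow> complex" where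
  "red U \<psi> \<alpha> x y = (\<Sum>z\<in>Pow (U - \<alpha>). \<psi> (x \<union> z) * cnj (\<psi> (y \<union> z)))"
definition pur :: "nat set \<Rightarrow> (nat set \<Rightarrow> complex) \<Rightarrow> nat set \<Rightarrow> complex" where
  "pur U \<psi> \<alpha> = (\<Sum>x\<in>Pow \<alpha>. \<Sum>y\<in>Pow \<alpha>. red U \<psi> \<alpha> x y * red U \<psi> \<alpha> y x)"
definition PP :: "nat set \<Rightarrow> (nat set \<Rightarrow> complex) \<Rightarrow> complex" where
  "PP U \<psi> = (\<Sum>\<alpha>\<in>Pow U. pur U \<psi> \<alpha>)"

lemma pow_split:
  assumes "finite A" "finite B" "A \<inter> B = {}"
  shows "(\<Sum>z\<in>Pow (A \<union> B). h z) = (\<Sum>a\<in>Pow A. \<Sum>b\<in>Pow B. h (a \<union> b))"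
proof -
  have im: "Pow (A \<union> B) = (\<lambda>(a,b). a \<union> b) ` (Pow A \<times> Pow B)"
  proof
    show "Pow (A \<union> B) \<subseteq> (\<lambda>(a,b). a \<union> b) ` (Pow A \<times> Pow B)"
    proof
      fix z assume "z \<in> Pow (A \<union> B)"
      then have 1: "z = (\<lambda>(a,b). a \<union> b) (z \<inter> A, z \<inter> B)" and 2: "(z \<inter> A, z \<inter> B) \<in> Pow A \<times> Pow B" by auto
      show "z \<in> (\<lambda>(a,b). a \<union> b) ` (Pow A \<times> Pow B)" using 1 2 by (rule image_eqI)
    qed
  next
    show "(\<lambda>(a,b). a \<union> b) ` (Pow A \<times> Pow B) \<subseteq> Pow (A \<union> B)" by auto
  qed
  have inj: "inj_on (\<lambda>(a,b). a \<union> b) (Pow A \<times> Pow B)"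
  proof (rule inj_onI, clarify)
    fix a b a' b' assume h: "a \<subseteq> A" "b \<subseteq> B" "a' \<subseteq> A" "b' \<subseteq> B" "a \<union> b = a' \<union> b'"
    then have "a = (a \<union> b) \<inter> A" "a' = (a' \<union> b') \<inter> A" "b = (a \<union> b) \<inter> B" "b' = (a' \<union> b') \<inter> B"
      using assms(3) by auto
    then show "a = a' \<and> b = b'" using h(5) by metis
  qed
  show ?thesis
    unfolding im sum.reindex[OF inj] sum.cartesian_product by (simp add: case_prod_unfold)
qed


lemma red_cnj: "red U \<psi> \<alpha> y x = cnj (red U \<psi> \<alpha> x y)"
  unfolding red_def by (simp add: mult.commute)

lemma PP_real: "cnj (PP U \<psi>) = PP U \<psi>"
proof -
  have "cnj (red U \<psi> \<alpha> x y * red U \<psi> \<alpha> y x) = red U \<psi> \<alpha> x y * red U \<psi> \<alpha> y x" for \<alpha> x y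
    by (metis complex_cnj_cnj complex_cnj_mult mult.commute red_cnj)
  then show ?thesis unfolding PP_def pur_def by simp
qed

lemma red_prod:
  assumes fin: "finite U" "finite V" and disj: "U \<inter> V = {}"
    and \<Phi>: "\<And>S. S \<subseteq> U \<union> V \<Longrightarrow> \<Phi> S = f (S \<inter> U) * g (S \<inter> V)"
    and a1: "\<alpha>1 \<subseteq> U" and a2: "\<alpha>2 \<subseteq> V"
    and x: "x1 \<subseteq> \<alpha>1" "x2 \<subseteq> \<alpha>2" and y: "y1 \<subseteq> \<alpha>1" "y2 \<subseteq> \<alpha>2"
  shows "red (U \<union> V) \<Phi> (\<alpha>1 \<union> \<alpha>2) (x1 \<union> x2) (y1 \<union> y2)
       = red U f \<alpha>1 x1 y1 * red V g \<alpha>2 x2 y2"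
proof -
  have e: "U \<union> V - (\<alpha>1 \<union> \<alpha>2) = (U - \<alpha>1) \<union> (V - \<alpha>2)" using disj a1 a2 by auto
  have "red (U \<union> V) \<Phi> (\<alpha>1 \<union> \<alpha>2) (x1 \<union> x2) (y1 \<union> y2)
     = (\<Sum>a\<in>Pow (U - \<alpha>1). \<Sum>b\<in>Pow (V - \<alpha>2).
          \<Phi> (x1 \<union> x2 \<union> (a \<union> b)) * cnj (\<Phi> (y1 \<union> y2 \<union> (a \<union> b))))"
    unfolding red_def e by (rule pow_split) (use fin disj in auto)
  also have "\<dots> = (\<Sum>a\<in>Pow (U - \<alpha>1). \<Sum>b\<in>Pow (V - \<alpha>2).
          (f (x1 \<union> a) * cnj (f (y1 \<union> a))) * (g (x2 \<union> b) * cnj (g (y2 \<union> b))))"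
  proof (intro sum.cong refl)
    fix a b assume ab: "a \<in> Pow (U - \<alpha>1)" "b \<in> Pow (V - \<alpha>2)"
    have s1: "x1 \<union> x2 \<union> (a \<union> b) \<subseteq> U \<union> V" "y1 \<union> y2 \<union> (a \<union> b) \<subseteq> U \<union> V"
      using ab a1 a2 x y by auto
    have i1: "(x1 \<union> x2 \<union> (a \<union> b)) \<inter> U = x1 \<union> a" "(x1 \<union> x2 \<union> (a \<union> b)) \<inter> V = x2 \<union> b"
         "(y1 \<union> y2 \<union> (a \<union> b)) \<inter> U = y1 \<union> a" "(y1 \<union> y2 \<union> (a \<union> b)) \<inter> V = y2 \<union> b"
      using ab a1 a2 x y disj by auto
    show "\<Phi> (x1 \<union> x2 \<union> (a \<union> b)) * cnj (\<Phi> (y1 \<union> y2 \<union> (a \<union> b))) =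
          (f (x1 \<union> a) * cnj (f (y1 \<union> a))) * (g (x2 \<union> b) * cnj (g (y2 \<union> b)))"
      unfolding \<Phi>[OF s1(1)] \<Phi>[OF s1(2)] i1 complex_cnj_mult by (simp only: mult_ac)
  qed
  also have "\<dots> = red U f \<alpha>1 x1 y1 * red V g \<alpha>2 x2 y2"
    unfolding red_def sum_product ..
  finally show ?thesis .
qed

lemma pur_prod:
  assumes fin: "finite U" "finite V" and disj: "U \<inter> V = {}"
    and \<Phi>: "\<And>S. S \<subseteq> U \<union> V \<Longrightarrow> \<Phi> S = f (S \<inter> U) * g (S \<inter> V)"
    and a1: "\<alpha>1 \<subseteq> U" and a2: "\<alpha>2 \<subseteq> V"
  shows "pur (U \<union> V) \<Phi> (\<alpha>1 \<union> \<alpha>2) = pur U f \<alpha>1 * pur V g \<alpha>2"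
proof -
  have f1: "finite \<alpha>1" "finite \<alpha>2" using a1 a2 fin finite_subset by auto
  have d: "\<alpha>1 \<inter> \<alpha>2 = {}" using a1 a2 disj by auto
  have "pur (U \<union> V) \<Phi> (\<alpha>1 \<union> \<alpha>2) = (\<Sum>x1\<in>Pow \<alpha>1. \<Sum>x2\<in>Pow \<alpha>2. \<Sum>y1\<in>Pow \<alpha>1. \<Sum>y2\<in>Pow \<alpha>2.
      red (U \<union> V) \<Phi> (\<alpha>1 \<union> \<alpha>2) (x1 \<union> x2) (y1 \<union> y2) * red (U \<union> V) \<Phi> (\<alpha>1 \<union> \<alpha>2) (y1 \<union> y2) (x1 \<union> x2))"
    unfolding pur_def pow_split[OF f1 d] ..
  also have "\<dots> = (\<Sum>x1\<in>Pow \<alpha>1. \<Sum>x2\<in>Pow \<alpha>2. \<Sum>y1\<in>Pow \<alpha>1. \<Sum>y2\<in>Pow \<alpha>2.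
      (red U f \<alpha>1 x1 y1 * red U f \<alpha>1 y1 x1) * (red V g \<alpha>2 x2 y2 * red V g \<alpha>2 y2 x2))"
    by (intro sum.cong refl, simp add: red_prod[of U V \<Phi> f g, OF fin disj \<Phi> a1 a2] mult_ac)
  also have "\<dots> = (\<Sum>x1\<in>Pow \<alpha>1. \<Sum>y1\<in>Pow \<alpha>1. \<Sum>x2\<in>Pow \<alpha>2. \<Sum>y2\<in>Pow \<alpha>2.
      (red U f \<alpha>1 x1 y1 * red U f \<alpha>1 y1 x1) * (red V g \<alpha>2 x2 y2 * red V g \<alpha>2 y2 x2))"
    by (rule sum.cong[OF refl], rule sum.swap)
  also have "\<dots> = pur U f \<alpha>1 * pur V g \<alpha>2"
    by (unfold pur_def[of U f \<alpha>1] sum_distrib_right, unfold pur_def sum_distrib_left, rule refl)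
  finally show ?thesis .
qed

lemma PP_prod:
  assumes fin: "finite U" "finite V" and disj: "U \<inter> V = {}"
    and \<Phi>: "\<And>S. S \<subseteq> U \<union> V \<Longrightarrow> \<Phi> S = f (S \<inter> U) * g (S \<inter> V)"
  shows "PP (U \<union> V) \<Phi> = PP U f * PP V g"
proof -
  have "PP (U \<union> V) \<Phi> = (\<Sum>a\<in>Pow U. \<Sum>b\<in>Pow V. pur (U \<union> V) \<Phi> (a \<union> b))"
    unfolding PP_def using pow_split[OF fin disj, of "pur (U \<union> V) \<Phi>"] .
  also have "\<dots> = (\<Sum>a\<in>Pow U. \<Sum>b\<in>Pow V. pur U f a * pur V g b)"
  proof (rule sum.cong[OF refl], rule sum.cong[OF refl])
    fix a b assume ab: "a \<in> Pow U" "b \<in> Pow V"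
    show "pur (U \<union> V) \<Phi> (a \<union> b) = pur U f a * pur V g b"
      by (rule pur_prod[of U V \<Phi> f g, OF fin disj \<Phi>]) (use ab in auto)
  qed
  also have "\<dots> = PP U f * PP V g" unfolding PP_def sum_product ..
  finally show ?thesis .
qed

lemma Pow_image: "Pow (h ` A) = image h ` Pow A"
  by (auto simp: subset_image_iff)

lemma vimage_image_inj: "inj_on h U \<Longrightarrow> A \<subseteq> U \<Longrightarrow> h -` (h ` A) \<inter> U = A"
  by (auto simp: inj_on_def)

lemma sum_Pow_image:
  assumes "inj_on h U" "A \<subseteq> U"
  shows "(\<Sum>z\<in>Pow (h ` A). F z) = (\<Sum>z\<in>Pow A. F (h ` z))"
proof -
  have "inj_on (image h) (Pow A)" using assms inj_on_image_Pow inj_on_subset by blast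
  then show ?thesis unfolding Pow_image by (simp add: sum.reindex)
qed

lemma PP_shift:
  assumes fin: "finite U" and inj: "inj_on h U" and g: "\<And>T. g T = \<psi> (h -` T \<inter> U)"
  shows "PP (h ` U) g = PP U \<psi>"
proof -
  have r: "red (h ` U) g (h ` \<alpha>) (h ` x) (h ` y) = red U \<psi> \<alpha> x y"
    if a: "\<alpha> \<subseteq> U" and xy: "x \<subseteq> \<alpha>" "y \<subseteq> \<alpha>" for \<alpha> x y
  proof -
    have d: "h ` U - h ` \<alpha> = h ` (U - \<alpha>)" using inj a by (simp add: inj_on_image_set_diff)
    have "red (h ` U) g (h ` \<alpha>) (h ` x) (h ` y)
       = (\<Sum>z\<in>Pow (U - \<alpha>). g (h ` x \<union> h ` z) * cnj (g (h ` y \<union> h ` z)))"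
      unfolding red_def d by (rule sum_Pow_image[OF inj]) auto
    also have "\<dots> = red U \<psi> \<alpha> x y"
      unfolding red_def
    proof (rule sum.cong[OF refl])
      fix z assume "z \<in> Pow (U - \<alpha>)"
      then have "x \<union> z \<subseteq> U" "y \<union> z \<subseteq> U" using a xy by auto
      then show "g (h ` x \<union> h ` z) * cnj (g (h ` y \<union> h ` z)) = \<psi> (x \<union> z) * cnj (\<psi> (y \<union> z))"
        unfolding g image_Un[symmetric] using vimage_image_inj[OF inj] by simp
    qed
    finally show ?thesis .
  qed
  have p: "pur (h ` U) g (h ` \<alpha>) = pur U \<psi> \<alpha>" if a: "\<alpha> \<subseteq> U" for \<alpha>
  proof -
    have ia: "inj_on h \<alpha>" using inj a inj_on_subset by blast
    show ?thesis unfolding pur_def sum_Pow_image[OF ia order_refl]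
      by (rule sum.cong[OF refl], rule sum.cong[OF refl]) (simp add: r[OF a])
  qed
  show ?thesis unfolding PP_def sum_Pow_image[OF inj order_refl]
    by (rule sum.cong[OF refl]) (simp add: p)
qed

lemma conc_PP: "conc m \<psi> = 1 - Re (PP {..<m} \<psi>) / 2 ^ m"
proof -
  have "purity m \<psi> \<alpha> = pur {..<m} \<psi> \<alpha>" for \<alpha>
    unfolding purity_def pur_def reduced_def red_def ..
  then show ?thesis unfolding conc_def PP_def by (simp add: Re_sum)
qed

lemma tp_PP: "PP {..<n*k} (tensor_power n k \<psi>) = PP {..<n} \<psi> ^ k"
proof (induction k)
  case 0
  then show ?case by (simp add: PP_def pur_def red_def tensor_power_def)
next
  case (Suc k)
  define h where "h = (\<lambda>i::nat. n*k + i)"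
  define g where "g = (\<lambda>T. \<psi> (h -` T \<inter> {..<n}))"
  have inj: "inj_on h {..<n}" unfolding h_def by (simp add: inj_on_def)
  have U: "{..<n * Suc k} = {..<n*k} \<union> h ` {..<n}"
  proof
    show "{..<n * Suc k} \<subseteq> {..<n*k} \<union> h ` {..<n}"
    proof
      fix x assume x: "x \<in> {..<n * Suc k}"
      show "x \<in> {..<n*k} \<union> h ` {..<n}"
      proof (cases "x < n*k")
        case False
        then have "x = h (x - n*k)" "x - n*k < n" using x unfolding h_def by auto
        then show ?thesis by blast
      qed simp
    qed
  qed (auto simp: h_def)
  have d: "{..<n*k} \<inter> h ` {..<n} = {}" unfolding h_def by auto
  have \<Phi>: "tensor_power n (Suc k) \<psi> S
      = tensor_power n k \<psi> (S \<inter> {..<n*k}) * g (S \<inter> h ` {..<n})" for S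
  proof -
    have a: "{i. i < n \<and> j * n + i \<in> S \<inter> {..<n*k}} = {i. i < n \<and> j * n + i \<in> S}" if "j < k" for j
    proof -
      have "j * n + i < n * k" if "i < n" for i
      proof -
        have "Suc j * n \<le> k * n" using \<open>j < k\<close> by (intro mult_le_mono1) simp
        then show ?thesis using that by (simp add: mult.commute)
      qed
      then show ?thesis by auto
    qed
    have b: "h -` (S \<inter> h ` {..<n}) \<inter> {..<n} = {i. i < n \<and> k * n + i \<in> S}"
      unfolding h_def by (auto simp: mult.commute)
    show ?thesis unfolding tensor_power_def g_def b prod.lessThan_Suc
      using a by simp
  qed
  have "PP {..<n * Suc k} (tensor_power n (Suc k) \<psi>)
      = PP {..<n*k} (tensor_power n k \<psi>) * PP (h ` {..<n}) g"
    unfolding U by (rule PP_prod) (use d \<Phi> in auto)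
  also have "PP (h ` {..<n}) g = PP {..<n} \<psi>"
    by (rule PP_shift[OF _ inj]) (simp_all add: g_def)
  finally show ?case using Suc.IH by simp
qed

theorem mainTheorem13:
  fixes n k :: nat and \<psi> :: "nat set \<Rightarrow> complex"
  assumes "pure_state n \<psi>" and "k \<ge> 1"
  shows "conc (n * k) (tensor_power n k \<psi>) = 1 - (1 - conc n \<psi>) ^ k"
proof -
  define P where "P = PP {..<n} \<psi>"
  have "Im P = 0" using PP_real[of "{..<n}" \<psi>] unfolding P_def complex_eq_iff by simp
  then have P: "P = complex_of_real (Re P)" by (simp add: complex_eq_iff)
  have "Re (P ^ k) = Re P ^ k" by (subst P) (simp only: of_real_power[symmetric] Re_complex_of_real)
  then show ?thesis
    unfolding conc_PP tp_PP P_def[symmetric] by (simp add: power_mult power_divide)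
qed

end
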